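(* Let $(M^3,g)$ be a Riemannian $3$-manifold with Ricci tensor $R_{ij}$ and scalar curvature $R$, and let $h$ be a symmetric $2$-tensor on $M$ with trace $H=g^{ij}h_{ij}$. Then at every point \[ |h|^2|\mathrm{Rc}|^2-2RH\,\mathrm{Rc}\cdot h+2R\,\mathrm{Rc}\cdot h^2+\tfrac12R^2\left(H^2-|h|^2\right)\geq0, \] where $\mathrm{Rc}\cdot h=R_{ij}h_{ij}$ and $\mathrm{Rc}\cdot h^2=R_{ij}h_{ik}h_{kj}$ (contractions with respect to $g$).
   Context: Norms and contractions are taken with respect to $g$ (orthonormal frame, repeated indices summed). *)

theory Defs
  imports "HOL-Analysis.Analysis"
begin

text \<open>Pointwise tensors in an orthonormal frame of the tangent space at a point
of a Riemannian 3-manifold are represented as 3x3 real matrices.\<close>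
definition contr :: "real^3^3 \<Rightarrow> real^3^3 \<Rightarrow> real" where
  "contr A B = (\<Sum>i\<in>UNIV. \<Sum>j\<in>UNIV. A $ i $ j * B $ i $ j)"

definition tnormsq :: "real^3^3 \<Rightarrow> real" where
  "tnormsq A = contr A A"

end

theory Submission
  imports Defs
begin

theorem lemma3:
  fixes Rc h :: "real^3^3"
  assumes "transpose Rc = Rc" and "transpose h = h"
  shows "tnormsq h * tnormsq Rc - 2 * trace Rc * trace h * contr Rc h
         + 2 * trace Rc * contr Rc (h ** h)
         + (1/2) * (trace Rc)^2 * ((trace h)^2 - tnormsq h) \<ge> 0"
proof -
  have sR: "Rc$j$i = Rc$i$j" for i j
    using arg_cong[OF assms(1), of "\<lambda>A. A$i$j"] by (simp add: transpose_def)
  have sh: "h$j$i = h$i$j" for i j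
    using arg_cong[OF assms(2), of "\<lambda>A. A$i$j"] by (simp add: transpose_def)
  have eq: "tnormsq h * tnormsq Rc - 2 * trace Rc * trace h * contr Rc h
         + 2 * trace Rc * contr Rc (h ** h)
         + (1/2) * (trace Rc)^2 * ((trace h)^2 - tnormsq h) =
    (1/2)*(((((Rc$1$1*h$1$1+Rc$1$2*h$1$2+Rc$1$3*h$1$3)+(h$1$1*Rc$1$1+h$1$2*Rc$1$2+h$1$3*Rc$1$3)-(Rc$1$1+Rc$2$2+Rc$3$3)*h$1$1)-(((Rc$1$1*h$1$1+Rc$1$2*h$1$2+Rc$1$3*h$1$3)+(h$1$1*Rc$1$1+h$1$2*Rc$1$2+h$1$3*Rc$1$3)-(Rc$1$1+Rc$2$2+Rc$3$3)*h$1$1)+((Rc$1$2*h$1$2+Rc$2$2*h$2$2+Rc$2$3*h$2$3)+(h$1$2*Rc$1$2+h$2$2*Rc$2$2+h$2$3*Rc$2$3)-(Rc$1$1+Rc$2$2+Rc$3$3)*h$2$2)+((Rc$1$3*h$1$3+Rc$2$3*h$2$3+Rc$3$3*h$3$3)+(h$1$3*Rc$1$3+h$2$3*Rc$2$3+h$3$3*Rc$3$3)-(Rc$1$1+Rc$2$2+Rc$3$3)*h$3$3))/3))^2 + (((Rc$1$1*h$1$2+Rc$1$2*h$2$2+Rc$1$3*h$2$3)+(h$1$1*Rc$1$2+h$1$2*Rc$2$2+h$1$3*Rc$2$3)-(Rc$1$1+Rc$2$2+Rc$3$3)*h$1$2))^2 + (((Rc$1$1*h$1$3+Rc$1$2*h$2$3+Rc$1$3*h$3$3)+(h$1$1*Rc$1$3+h$1$2*Rc$2$3+h$1$3*Rc$3$3)-(Rc$1$1+Rc$2$2+Rc$3$3)*h$1$3))^2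 + (((Rc$1$2*h$1$1+Rc$2$2*h$1$2+Rc$2$3*h$1$3)+(h$1$2*Rc$1$1+h$2$2*Rc$1$2+h$2$3*Rc$1$3)-(Rc$1$1+Rc$2$2+Rc$3$3)*h$1$2))^2 + ((((Rc$1$2*h$1$2+Rc$2$2*h$2$2+Rc$2$3*h$2$3)+(h$1$2*Rc$1$2+h$2$2*Rc$2$2+h$2$3*Rc$2$3)-(Rc$1$1+Rc$2$2+Rc$3$3)*h$2$2)-(((Rc$1$1*h$1$1+Rc$1$2*h$1$2+Rc$1$3*h$1$3)+(h$1$1*Rc$1$1+h$1$2*Rc$1$2+h$1$3*Rc$1$3)-(Rc$1$1+Rc$2$2+Rc$3$3)*h$1$1)+((Rc$1$2*h$1$2+Rc$2$2*h$2$2+Rc$2$3*h$2$3)+(h$1$2*Rc$1$2+h$2$2*Rc$2$2+h$2$3*Rc$2$3)-(Rc$1$1+Rc$2$2+Rc$3$3)*h$2$2)+((Rc$1$3*h$1$3+Rc$2$3*h$2$3+Rc$3$3*h$3$3)+(h$1$3*Rc$1$3+h$2$3*Rc$2$3+h$3$3*Rc$3$3)-(Rc$1$1+Rc$2$2+Rc$3$3)*h$3$3))/3))^2 + (((Rc$1$2*h$1$3+Rc$2$2*h$2$3+Rc$2$3*h$3$3)+(h$1$2*Rc$1$3+h$2$2*Rc$2$3+h$2$3*Rc$3$3)-(Rc$1$1+Rc$2$2+Rc$3$3)*h$2$3))^2 + (((Rc$1$3*h$1$1+Rc$2$3*h$1$2+Rc$3$3*h$1$3)+(h$1$3*Rc$1$1+h$2$3*Rc$1$2+h$3$3*Rc$1$3)-(Rc$1$1+Rc$2$2+Rc$3$3)*h$1$3))^2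 + (((Rc$1$3*h$1$2+Rc$2$3*h$2$2+Rc$3$3*h$2$3)+(h$1$3*Rc$1$2+h$2$3*Rc$2$2+h$3$3*Rc$2$3)-(Rc$1$1+Rc$2$2+Rc$3$3)*h$2$3))^2 + ((((Rc$1$3*h$1$3+Rc$2$3*h$2$3+Rc$3$3*h$3$3)+(h$1$3*Rc$1$3+h$2$3*Rc$2$3+h$3$3*Rc$3$3)-(Rc$1$1+Rc$2$2+Rc$3$3)*h$3$3)-(((Rc$1$1*h$1$1+Rc$1$2*h$1$2+Rc$1$3*h$1$3)+(h$1$1*Rc$1$1+h$1$2*Rc$1$2+h$1$3*Rc$1$3)-(Rc$1$1+Rc$2$2+Rc$3$3)*h$1$1)+((Rc$1$2*h$1$2+Rc$2$2*h$2$2+Rc$2$3*h$2$3)+(h$1$2*Rc$1$2+h$2$2*Rc$2$2+h$2$3*Rc$2$3)-(Rc$1$1+Rc$2$2+Rc$3$3)*h$2$2)+((Rc$1$3*h$1$3+Rc$2$3*h$2$3+Rc$3$3*h$3$3)+(h$1$3*Rc$1$3+h$2$3*Rc$2$3+h$3$3*Rc$3$3)-(Rc$1$1+Rc$2$2+Rc$3$3)*h$3$3))/3))^2) + (((((Rc$1$1*h$1$1+Rc$1$2*h$1$2+Rc$1$3*h$1$3)+(h$1$1*Rc$1$1+h$1$2*Rc$1$2+h$1$3*Rc$1$3)-(h$1$1+h$2$2+h$3$3)*Rc$1$1)-(((Rc$1$1*h$1$1+Rc$1$2*h$1$2+Rc$1$3*h$1$3)+(h$1$1*Rc$1$1+h$1$2*Rc$1$2+h$1$3*Rc$1$3)-(h$1$1+h$2$2+h$3$3)*Rc$1$1)+((Rc$1$2*h$1$2+Rc$2$2*h$2$2+Rc$2$3*h$2$3)+(h$1$2*Rc$1$2+h$2$2*Rc$2$2+h$2$3*Rc$2$3)-(h$1$1+h$2$2+h$3$3)*Rc$2$2)+((Rc$1$3*h$1$3+Rc$2$3*h$2$3+Rc$3$3*h$3$3)+(h$1$3*Rc$1$3+h$2$3*Rc$2$3+h$3$3*Rc$3$3)-(h$1$1+h$2$2+h$3$3)*Rc$3$3))/3))^2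 + (((Rc$1$1*h$1$2+Rc$1$2*h$2$2+Rc$1$3*h$2$3)+(h$1$1*Rc$1$2+h$1$2*Rc$2$2+h$1$3*Rc$2$3)-(h$1$1+h$2$2+h$3$3)*Rc$1$2))^2 + (((Rc$1$1*h$1$3+Rc$1$2*h$2$3+Rc$1$3*h$3$3)+(h$1$1*Rc$1$3+h$1$2*Rc$2$3+h$1$3*Rc$3$3)-(h$1$1+h$2$2+h$3$3)*Rc$1$3))^2 + (((Rc$1$2*h$1$1+Rc$2$2*h$1$2+Rc$2$3*h$1$3)+(h$1$2*Rc$1$1+h$2$2*Rc$1$2+h$2$3*Rc$1$3)-(h$1$1+h$2$2+h$3$3)*Rc$1$2))^2 + ((((Rc$1$2*h$1$2+Rc$2$2*h$2$2+Rc$2$3*h$2$3)+(h$1$2*Rc$1$2+h$2$2*Rc$2$2+h$2$3*Rc$2$3)-(h$1$1+h$2$2+h$3$3)*Rc$2$2)-(((Rc$1$1*h$1$1+Rc$1$2*h$1$2+Rc$1$3*h$1$3)+(h$1$1*Rc$1$1+h$1$2*Rc$1$2+h$1$3*Rc$1$3)-(h$1$1+h$2$2+h$3$3)*Rc$1$1)+((Rc$1$2*h$1$2+Rc$2$2*h$2$2+Rc$2$3*h$2$3)+(h$1$2*Rc$1$2+h$2$2*Rc$2$2+h$2$3*Rc$2$3)-(h$1$1+h$2$2+h$3$3)*Rc$2$2)+((Rc$1$3*h$1$3+Rc$2$3*h$2$3+Rc$3$3*h$3$3)+(h$1$3*Rc$1$3+h$2$3*Rc$2$3+h$3$3*Rc$3$3)-(h$1$1+h$2$2+h$3$3)*Rc$3$3))/3))^2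 + (((Rc$1$2*h$1$3+Rc$2$2*h$2$3+Rc$2$3*h$3$3)+(h$1$2*Rc$1$3+h$2$2*Rc$2$3+h$2$3*Rc$3$3)-(h$1$1+h$2$2+h$3$3)*Rc$2$3))^2 + (((Rc$1$3*h$1$1+Rc$2$3*h$1$2+Rc$3$3*h$1$3)+(h$1$3*Rc$1$1+h$2$3*Rc$1$2+h$3$3*Rc$1$3)-(h$1$1+h$2$2+h$3$3)*Rc$1$3))^2 + (((Rc$1$3*h$1$2+Rc$2$3*h$2$2+Rc$3$3*h$2$3)+(h$1$3*Rc$1$2+h$2$3*Rc$2$2+h$3$3*Rc$2$3)-(h$1$1+h$2$2+h$3$3)*Rc$2$3))^2 + ((((Rc$1$3*h$1$3+Rc$2$3*h$2$3+Rc$3$3*h$3$3)+(h$1$3*Rc$1$3+h$2$3*Rc$2$3+h$3$3*Rc$3$3)-(h$1$1+h$2$2+h$3$3)*Rc$3$3)-(((Rc$1$1*h$1$1+Rc$1$2*h$1$2+Rc$1$3*h$1$3)+(h$1$1*Rc$1$1+h$1$2*Rc$1$2+h$1$3*Rc$1$3)-(h$1$1+h$2$2+h$3$3)*Rc$1$1)+((Rc$1$2*h$1$2+Rc$2$2*h$2$2+Rc$2$3*h$2$3)+(h$1$2*Rc$1$2+h$2$2*Rc$2$2+h$2$3*Rc$2$3)-(h$1$1+h$2$2+h$3$3)*Rc$2$2)+((Rc$1$3*h$1$3+Rc$2$3*h$2$3+Rc$3$3*h$3$3)+(h$1$3*Rc$1$3+h$2$3*Rc$2$3+h$3$3*Rc$3$3)-(h$1$1+h$2$2+h$3$3)*Rc$3$3))/3))^2)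 + (1/2)*((((Rc$1$1*h$1$1+Rc$1$2*h$1$2+Rc$1$3*h$1$3)-(h$1$1*Rc$1$1+h$1$2*Rc$1$2+h$1$3*Rc$1$3)))^2 + (((Rc$1$1*h$1$2+Rc$1$2*h$2$2+Rc$1$3*h$2$3)-(h$1$1*Rc$1$2+h$1$2*Rc$2$2+h$1$3*Rc$2$3)))^2 + (((Rc$1$1*h$1$3+Rc$1$2*h$2$3+Rc$1$3*h$3$3)-(h$1$1*Rc$1$3+h$1$2*Rc$2$3+h$1$3*Rc$3$3)))^2 + (((Rc$1$2*h$1$1+Rc$2$2*h$1$2+Rc$2$3*h$1$3)-(h$1$2*Rc$1$1+h$2$2*Rc$1$2+h$2$3*Rc$1$3)))^2 + (((Rc$1$2*h$1$2+Rc$2$2*h$2$2+Rc$2$3*h$2$3)-(h$1$2*Rc$1$2+h$2$2*Rc$2$2+h$2$3*Rc$2$3)))^2 + (((Rc$1$2*h$1$3+Rc$2$2*h$2$3+Rc$2$3*h$3$3)-(h$1$2*Rc$1$3+h$2$2*Rc$2$3+h$2$3*Rc$3$3)))^2 + (((Rc$1$3*h$1$1+Rc$2$3*h$1$2+Rc$3$3*h$1$3)-(h$1$3*Rc$1$1+h$2$3*Rc$1$2+h$3$3*Rc$1$3)))^2 + (((Rc$1$3*h$1$2+Rc$2$3*h$2$2+Rc$3$3*h$2$3)-(h$1$3*Rc$1$2+h$2$3*Rc$2$2+h$3$3*Rc$2$3)))^2 + (((Rc$1$3*h$1$3+Rc$2$3*h$2$3+Rc$3$3*h$3$3)-(h$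1$3*Rc$1$3+h$2$3*Rc$2$3+h$3$3*Rc$3$3)))^2)"
    unfolding contr_def tnormsq_def trace_def matrix_matrix_mult_def
    by (simp add: sum_3 sR[of 1 2] sR[of 1 3] sR[of 2 3] sh[of 1 2] sh[of 1 3] sh[of 2 3]; algebra)
  show ?thesis unfolding eq
    by (intro add_nonneg_nonneg mult_nonneg_nonneg zero_le_power2) simp_all
qed

end
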